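(* For every real $r\ge 0$, the sphere $S_r(\Delta_1)=\{Y\in\mathcal{GH}: d_{GH}(\Delta_1,Y)=r\}$ is path connected, i.e., any two of its elements can be joined by a continuous curve in $\mathcal{GH}$ whose image lies in $S_r(\Delta_1)$.
   Context: All metric spaces (with finite-valued metrics) are considered up to isometry. $\mathcal{GH}$ denotes the class (in the sense of von Neumann–Bernays–Gödel set theory) of representatives of isometry classes of all metric spaces. $d_{GH}$ is the Gromov–Hausdorff distance, with values in $[0,\infty]$: $d_{GH}(X,Y)$ is the infimum of $r$ such that there exist a metric space $Z$ and subsets $X',Y'\subset Z$ isometric to $X,Y$ with Hausdorff distance $d_H(X',Y')\le r$. Topology on the class: for each cardinal $n$, the subclass $\mathcal{GH}_n$ of spaces of cardinality at most $n$ is a set, endowed with the topology whose base consists of the open balls of $d_{GH}$. A map $f$ from a topological space $Z$ to $\mathcal{GH}$ is continuous if it is continuous as a map into $\mathcal{GH}_n$ for some (equivalently, every) cardinal $n$ with $f(Z)\subset\mathcal{GH}_n$. A continuous curve is a continuous map from a segment $[a,b]$. $\Delta_1$ is the single-point metric space. *)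

theory Defs
  imports "HOL-Analysis.Analysis"
begin

definition nbhd :: "'a metric \<Rightarrow> 'a set \<Rightarrow> real \<Rightarrow> 'a set" where
  "nbhd Z A r = {z \<in> mspace Z. \<exists>a\<in>A. mdist Z z a < r}"

text \<open>Hausdorff distance (extended-real valued; infinite if no r works).\<close>
definition hausdorff_dist :: "'a metric \<Rightarrow> 'a set \<Rightarrow> 'a set \<Rightarrow> ereal" where
  "hausdorff_dist Z A B =
     Inf {ereal r | r. r > 0 \<and> A \<subseteq> nbhd Z B r \<and> B \<subseteq> nbhd Z A r}"

definition isom_embedding :: "('a \<Rightarrow> 'c) \<Rightarrow> 'a metric \<Rightarrow> 'c metric \<Rightarrow> bool" where
  "isom_embedding f X Z \<longleftrightarrow> f ` mspace X \<subseteq> mspace Z \<and>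
     (\<forall>x\<in>mspace X. \<forall>y\<in>mspace X. mdist Z (f x) (f y) = mdist X x y)"

definition isometric :: "'a metric \<Rightarrow> 'b metric \<Rightarrow> bool" where
  "isometric X Y \<longleftrightarrow> (\<exists>f. bij_betw f (mspace X) (mspace Y) \<and>
     (\<forall>x\<in>mspace X. \<forall>y\<in>mspace X. mdist Y (f x) (f y) = mdist X x y))"

text \<open>Gromov--Hausdorff distance.  The ambient space Z is taken with carrier in the
  type 'a + 'b; this is no restriction, since X' \<union> Y' always fits there.\<close>
definition GH_dist :: "'a metric \<Rightarrow> 'b metric \<Rightarrow> ereal" where
  "GH_dist X Y = Inf {ereal r | r. \<exists>(Z :: ('a + 'b) metric) f g.
      isom_embedding f X Z \<and> isom_embedding g Y Z \<and>
      hausdorff_dist Z (f ` mspace X) (g ` mspace Y) \<le> ereal r}"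

definition Delta1 :: "unit metric" where
  "Delta1 = metric ({()}, \<lambda>x y. 0)"

text \<open>Open GH-balls and the topology they generate on metric spaces carried by 'c
  (i.e. on GH_n for n = |'c|).\<close>
definition GH_ball :: "'c metric \<Rightarrow> real \<Rightarrow> 'c metric set" where
  "GH_ball C e = {Y. GH_dist C Y < ereal e}"

definition GH_top :: "'c metric topology" where
  "GH_top = topology_generated_by {GH_ball C e | C e. e > 0}"

end

theory Submission
  imports Defs
begin


lemma ereal_le_by_gt:
  assumes "\<And>h. h > e \<Longrightarrow> x \<le> ereal h"
  shows "x \<le> ereal e"
proof (rule ereal_le_epsilon2)
  fix d :: real assume "0 < d"
  then have "x \<le> ereal (e + d)" using assms by simp
  then show "x \<le> ereal e + ereal d" by simp
qed

lemma mdist_self: "x \<in> mspace m \<Longrightarrow> mdist m x x = 0"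
  by (meson mdist_zero)

definition corr :: "'p metric \<Rightarrow> 'q metric \<Rightarrow> ('p \<times> 'q) set \<Rightarrow> real \<Rightarrow> bool" where
  "corr A B R e \<longleftrightarrow> R \<subseteq> mspace A \<times> mspace B \<and> (\<forall>a\<in>mspace A. \<exists>b. (a,b)\<in>R) \<and>
     (\<forall>b\<in>mspace B. \<exists>a. (a,b)\<in>R) \<and>
     (\<forall>a b a' b'. (a,b)\<in>R \<longrightarrow> (a',b')\<in>R \<longrightarrow> \<bar>mdist A a a' - mdist B b b'\<bar> \<le> e)"

lemma corr_comp:
  assumes "corr A B R1 e1" "corr B C R2 e2"
  shows "corr A C (R1 O R2) (e1 + e2)"
proof -
  have d: "\<bar>mdist A a a' - mdist C c c'\<bar> \<le> e1 + e2"
    if "(a,c) \<in> R1 O R2" "(a',c') \<in> R1 O R2" for a a' c c'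
  proof -
    from that obtain b b' where "(a,b)\<in>R1" "(b,c)\<in>R2" "(a',b')\<in>R1" "(b',c')\<in>R2" by auto
    then have "\<bar>mdist A a a' - mdist B b b'\<bar> \<le> e1" "\<bar>mdist B b b' - mdist C c c'\<bar> \<le> e2"
      using assms unfolding corr_def by blast+
    then show ?thesis by linarith
  qed
  show ?thesis using assms d unfolding corr_def by (auto 0 3 dest: subsetD) (meson relcomp.relcompI subsetD mem_Sigma_iff)+
qed



context
  fixes A :: "'p metric" and B :: "'q metric" and R :: "('p \<times> 'q) set" and e h :: real
  assumes cor: "corr A B R (2*e)" and ne: "mspace A \<noteq> {}" and eh: "0 \<le> e" "e < h"
begin

definition cr :: "'p \<Rightarrow> 'q \<Rightarrow> real" where
  "cr a b = h + Inf ((\<lambda>(a',b'). mdist A a a' + mdist B b' b) ` R)"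

lemma R_ne: "R \<noteq> {}"
  using cor ne unfolding corr_def by blast

lemma R_sub: "(a,b) \<in> R \<Longrightarrow> a \<in> mspace A \<and> b \<in> mspace B"
  using cor unfolding corr_def by blast

lemma R_dis: "(a,b) \<in> R \<Longrightarrow> (a',b') \<in> R \<Longrightarrow> mdist A a a' \<le> mdist B b b' + 2*e"
  using cor unfolding corr_def by (metis abs_le_D1 diff_le_eq add.commute)

lemma R_dis2: "(a,b) \<in> R \<Longrightarrow> (a',b') \<in> R \<Longrightarrow> mdist B b b' \<le> mdist A a a' + 2*e"
  using cor unfolding corr_def by (metis abs_le_D2 minus_diff_eq diff_le_eq add.commute)

lemma cr_le: "(a',b') \<in> R \<Longrightarrow> cr a b \<le> h + mdist A a a' + mdist B b' b"
proof -
  assume p: "(a',b') \<in> R"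
  have "Inf ((\<lambda>(a',b'). mdist A a a' + mdist B b' b) ` R) \<le> mdist A a a' + mdist B b' b"
    by (rule cInf_lower) (use p in \<open>force\<close>, rule bdd_belowI[of _ 0], auto)
  then show ?thesis unfolding cr_def by simp
qed

lemma cr_ge: "(\<And>a' b'. (a',b') \<in> R \<Longrightarrow> c \<le> h + mdist A a a' + mdist B b' b) \<Longrightarrow> c \<le> cr a b"
proof -
  assume H: "\<And>a' b'. (a',b') \<in> R \<Longrightarrow> c \<le> h + mdist A a a' + mdist B b' b"
  have "c - h \<le> Inf ((\<lambda>(a',b'). mdist A a a' + mdist B b' b) ` R)"
  proof (rule cInf_greatest)
    show "(\<lambda>(a',b'). mdist A a a' + mdist B b' b) ` R \<noteq> {}" using R_ne by blast
  next
    fix x assume "x \<in> (\<lambda>(a',b'). mdist A a a' + mdist B b' b) ` R"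
    then obtain a' b' where "(a',b') \<in> R" "x = mdist A a a' + mdist B b' b" by auto
    then show "c - h \<le> x" using H by fastforce
  qed
  then show ?thesis unfolding cr_def by simp
qed

lemma cr_pos: "h \<le> cr a b"
  by (rule cr_ge) (simp add: add_nonneg_nonneg)

lemma L1: "a \<in> mspace A \<Longrightarrow> a1 \<in> mspace A \<Longrightarrow> cr a b \<le> mdist A a a1 + cr a1 b"
proof -
  assume aa: "a \<in> mspace A" "a1 \<in> mspace A"
  have "cr a b - mdist A a a1 \<le> cr a1 b"
  proof (rule cr_ge)
    fix a' b' assume p: "(a',b') \<in> R"
    have "mdist A a a' \<le> mdist A a a1 + mdist A a1 a'" using aa R_sub[OF p] mdist_triangle by metis
    then show "cr a b - mdist A a a1 \<le> h + mdist A a1 a' + mdist B b' b" using cr_le[OF p, of a b] by linarith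
  qed
  then show ?thesis by linarith
qed

lemma L2: "b \<in> mspace B \<Longrightarrow> b1 \<in> mspace B \<Longrightarrow> cr a b \<le> cr a b1 + mdist B b1 b"
proof -
  assume bb: "b \<in> mspace B" "b1 \<in> mspace B"
  have "cr a b - mdist B b1 b \<le> cr a b1"
  proof (rule cr_ge)
    fix a' b' assume p: "(a',b') \<in> R"
    have "mdist B b' b \<le> mdist B b' b1 + mdist B b1 b" using bb R_sub[OF p] mdist_triangle by metis
    then show "cr a b - mdist B b1 b \<le> h + mdist A a a' + mdist B b' b1" using cr_le[OF p, of a b] by linarith
  qed
  then show ?thesis by linarith
qed

lemma L3: "a \<in> mspace A \<Longrightarrow> a2 \<in> mspace A \<Longrightarrow> b \<in> mspace B \<Longrightarrow> mdist A a a2 \<le> cr a b + cr a2 b"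
proof -
  assume aa: "a \<in> mspace A" "a2 \<in> mspace A" "b \<in> mspace B"
  have "mdist A a a2 - cr a2 b \<le> cr a b"
  proof (rule cr_ge)
    fix a' b' assume p: "(a',b') \<in> R"
    have "mdist A a a2 - h - mdist A a a' - mdist B b' b \<le> cr a2 b"
    proof (rule cr_ge)
      fix a'' b'' assume q: "(a'',b'') \<in> R"
      have t1: "mdist A a a2 \<le> mdist A a a' + mdist A a' a2" using aa R_sub[OF p] mdist_triangle by metis
      have t2: "mdist A a' a2 \<le> mdist A a' a'' + mdist A a'' a2" using aa R_sub[OF p] R_sub[OF q] mdist_triangle by metis
      have t3: "mdist B b' b'' \<le> mdist B b' b + mdist B b b''" using aa R_sub[OF p] R_sub[OF q] mdist_triangle by metis
      have t4: "mdist A a' a'' \<le> mdist B b' b'' + 2*e" using R_dis[OF p q] .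
      have "mdist A a'' a2 = mdist A a2 a''" "mdist B b b'' = mdist B b'' b" by (simp_all add: mdist_commute)
      then show "mdist A a a2 - h - mdist A a a' - mdist B b' b \<le> h + mdist A a2 a'' + mdist B b'' b"
        using t1 t2 t3 t4 eh by linarith
    qed
    then show "mdist A a a2 - cr a2 b \<le> h + mdist A a a' + mdist B b' b" by linarith
  qed
  then show ?thesis by linarith
qed

lemma L4: "a \<in> mspace A \<Longrightarrow> b \<in> mspace B \<Longrightarrow> b2 \<in> mspace B \<Longrightarrow> mdist B b b2 \<le> cr a b + cr a b2"
proof -
  assume aa: "a \<in> mspace A" "b \<in> mspace B" "b2 \<in> mspace B"
  have "mdist B b b2 - cr a b2 \<le> cr a b"
  proof (rule cr_ge)
    fix a' b' assume p: "(a',b') \<in> R"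
    have "mdist B b b2 - h - mdist A a a' - mdist B b' b \<le> cr a b2"
    proof (rule cr_ge)
      fix a'' b'' assume q: "(a'',b'') \<in> R"
      have t1: "mdist B b b2 \<le> mdist B b b' + mdist B b' b2" using aa R_sub[OF p] mdist_triangle by metis
      have t2: "mdist B b' b2 \<le> mdist B b' b'' + mdist B b'' b2" using aa R_sub[OF p] R_sub[OF q] mdist_triangle by metis
      have t3: "mdist A a' a'' \<le> mdist A a' a + mdist A a a''" using aa R_sub[OF p] R_sub[OF q] mdist_triangle by metis
      have t4: "mdist B b' b'' \<le> mdist A a' a'' + 2*e" using R_dis2[OF p q] .
      have "mdist B b b' = mdist B b' b" "mdist A a' a = mdist A a a'" by (simp_all add: mdist_commute)
      then show "mdist B b b2 - h - mdist A a a' - mdist B b' b \<le> h + mdist A a a'' + mdist B b'' b2"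
        using t1 t2 t3 t4 eh by linarith
    qed
    then show "mdist B b b2 - cr a b2 \<le> h + mdist A a a' + mdist B b' b" by linarith
  qed
  then show ?thesis by linarith
qed

definition dZ :: "('p + 'q) \<Rightarrow> ('p + 'q) \<Rightarrow> real" where
  "dZ u v = (case u of Inl a \<Rightarrow> (case v of Inl a' \<Rightarrow> mdist A a a' | Inr b \<Rightarrow> cr a b)
                   | Inr b \<Rightarrow> (case v of Inl a \<Rightarrow> cr a b | Inr b' \<Rightarrow> mdist B b b'))"

lemma dZ_simps [simp]: "dZ (Inl a) (Inl a') = mdist A a a'" "dZ (Inr b) (Inr b') = mdist B b b'"
  "dZ (Inl a) (Inr b) = cr a b" "dZ (Inr b) (Inl a) = cr a b"
  by (simp_all add: dZ_def)

lemma MZ: "Metric_space (Inl ` mspace A \<union> Inr ` mspace B) dZ"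
proof
  fix x y show "0 \<le> dZ x y"
    using cr_pos eh by (cases x; cases y) (auto intro: order_trans[of 0 h])
  show "dZ x y = dZ y x" by (cases x; cases y) (auto simp: mdist_commute)
next
  fix x y assume "x \<in> Inl ` mspace A \<union> Inr ` mspace B" "y \<in> Inl ` mspace A \<union> Inr ` mspace B"
  then show "dZ x y = 0 \<longleftrightarrow> x = y"
    using cr_pos eh by (cases x; cases y) (auto, (metis less_le_not_le order_le_less_trans)+)
next
  fix x y z assume H: "x \<in> Inl ` mspace A \<union> Inr ` mspace B" "y \<in> Inl ` mspace A \<union> Inr ` mspace B"
    "z \<in> Inl ` mspace A \<union> Inr ` mspace B"
  show "dZ x z \<le> dZ x y + dZ y z"
  proof (cases x)
    case (Inl a) note x = this
    show ?thesis
    proof (cases y)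
      case (Inl a1) note y = this
      show ?thesis using H x y L1
        by (cases z) (auto simp: mdist_triangle)
    next
      case (Inr b) note y = this
      show ?thesis
      proof (cases z)
        case (Inl a2) then show ?thesis using H x y L3 by auto
      next
        case (Inr b2) then show ?thesis using H x y L2[of b2 b a] by (auto simp: mdist_commute)
      qed
    qed
  next
    case (Inr b) note x = this
    show ?thesis
    proof (cases y)
      case (Inl a1) note y = this
      show ?thesis
      proof (cases z)
        case (Inl a2) then show ?thesis using H x y L1[of a2 a1 b] by (auto simp: mdist_commute)
      next
        case (Inr b2) then show ?thesis using H x y L4 by auto
      qed
    next
      case (Inr b1) note y = this
      show ?thesis
      proof (cases z)
        case (Inl a2) then show ?thesis using H x y L2[of b b1 a2] by (auto simp: mdist_commute)
      next
        case (Inr b2) then show ?thesis using H x y by (auto simp: mdist_triangle)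
      qed
    qed
  qed
qed

lemma GH_le_h: "GH_dist A B \<le> ereal h"
proof -
  interpret Z: Metric_space "Inl ` mspace A \<union> Inr ` mspace B" dZ by (rule MZ)
  define Z where "Z = metric (Inl ` mspace A \<union> Inr ` mspace B, dZ)"
  have ms: "mspace Z = Inl ` mspace A \<union> Inr ` mspace B" "mdist Z = dZ" unfolding Z_def by simp_all
  have e1: "isom_embedding Inl A Z" "isom_embedding Inr B Z" unfolding isom_embedding_def ms by auto
  have hd: "hausdorff_dist Z (Inl ` mspace A) (Inr ` mspace B) \<le> ereal h"
    unfolding hausdorff_dist_def
  proof (rule ereal_le_by_gt)
    fix s assume s: "s > h"
    have "Inl ` mspace A \<subseteq> nbhd Z (Inr ` mspace B) s"
    proof
      fix u :: "'p + 'q" assume "u \<in> Inl ` mspace A"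
      then obtain a where a: "u = Inl a" "a \<in> mspace A" by auto
      then obtain b where ab: "(a,b) \<in> R" using cor unfolding corr_def by blast
      have "cr a b \<le> h" using cr_le[OF ab, of a b] R_sub[OF ab] mdist_self[of a A] mdist_self[of b B] by auto
      then show "u \<in> nbhd Z (Inr ` mspace B) s" unfolding nbhd_def ms using a ab R_sub s
        by (auto intro!: bexI[of _ "Inr b"] bexI[of _ b])
    qed
    moreover have "Inr ` mspace B \<subseteq> nbhd Z (Inl ` mspace A) s"
    proof
      fix u :: "'p + 'q" assume "u \<in> Inr ` mspace B"
      then obtain b where b: "u = Inr b" "b \<in> mspace B" by auto
      then obtain a where ab: "(a,b) \<in> R" using cor unfolding corr_def by blast
      have "cr a b \<le> h" using cr_le[OF ab, of a b] R_sub[OF ab] mdist_self[of a A] mdist_self[of b B] by auto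
      then show "u \<in> nbhd Z (Inl ` mspace A) s" unfolding nbhd_def ms using b ab R_sub s
        by (auto intro!: bexI[of _ "Inl a"] bexI[of _ a])
    qed
    moreover have "s > 0" using s eh by linarith
    ultimately show "Inf {ereal r |r. r > 0 \<and> Inl ` mspace A \<subseteq> nbhd Z (Inr ` mspace B) r \<and>
        Inr ` mspace B \<subseteq> nbhd Z (Inl ` mspace A) r} \<le> ereal s"
      by (intro Inf_lower) auto
  qed
  show ?thesis unfolding GH_dist_def
    by (rule Inf_lower) (use e1 hd in blast)
qed

end

lemma corr_GH:
  assumes "corr A B R (2*e)" "mspace A \<noteq> {}" "0 \<le> e"
  shows "GH_dist A B \<le> ereal e"
  by (rule ereal_le_by_gt) (rule GH_le_h[OF assms], simp)



lemma GH_lt_corr: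
  fixes A :: "'a metric" and B :: "'b metric"
  assumes "GH_dist A B < ereal e"
  shows "\<exists>R s. s < e \<and> corr A B R (2 * s)"
proof -
  from assms obtain x where "x \<in> {ereal r | r. \<exists>(Z :: ('a + 'b) metric) f g.
      isom_embedding f A Z \<and> isom_embedding g B Z \<and>
      hausdorff_dist Z (f ` mspace A) (g ` mspace B) \<le> ereal r}" "x < ereal e"
    unfolding GH_dist_def Inf_less_iff by blast
  then obtain r0 and Z :: "('a + 'b) metric" and f g where r0: "r0 < e" "isom_embedding f A Z" "isom_embedding g B Z"
     "hausdorff_dist Z (f ` mspace A) (g ` mspace B) \<le> ereal r0"
    by auto
  have "hausdorff_dist Z (f ` mspace A) (g ` mspace B) < ereal e"
  proof -
    have "ereal r0 < ereal e" using r0(1) by simp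
    then show ?thesis using r0(4) by (rule order_le_less_trans[rotated])
  qed
  then obtain s where s: "s < e" "s > 0" "f ` mspace A \<subseteq> nbhd Z (g ` mspace B) s"
      "g ` mspace B \<subseteq> nbhd Z (f ` mspace A) s"
    unfolding hausdorff_dist_def Inf_less_iff by auto
  define R where "R = {(a,b). a \<in> mspace A \<and> b \<in> mspace B \<and> mdist Z (f a) (g b) < s}"
  have fA: "\<And>a. a \<in> mspace A \<Longrightarrow> f a \<in> mspace Z" and gB: "\<And>b. b \<in> mspace B \<Longrightarrow> g b \<in> mspace Z"
    using r0 unfolding isom_embedding_def by auto
  have fd: "\<And>a a'. a \<in> mspace A \<Longrightarrow> a' \<in> mspace A \<Longrightarrow> mdist Z (f a) (f a') = mdist A a a'"
   and gd: "\<And>b b'. b \<in> mspace B \<Longrightarrow> b' \<in> mspace B \<Longrightarrow> mdist Z (g b) (g b') = mdist B b b'"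
    using r0 unfolding isom_embedding_def by auto
  have "corr A B R (2 * s)"
    unfolding corr_def
  proof (intro conjI allI impI ballI)
    show "R \<subseteq> mspace A \<times> mspace B" unfolding R_def by auto
  next
    fix a assume a: "a \<in> mspace A"
    then have "f a \<in> nbhd Z (g ` mspace B) s" using s by auto
    then show "\<exists>b. (a,b) \<in> R" unfolding nbhd_def R_def using a by auto
  next
    fix b assume b: "b \<in> mspace B"
    then have "g b \<in> nbhd Z (f ` mspace A) s" using s by auto
    then show "\<exists>a. (a,b) \<in> R" unfolding nbhd_def R_def using b by (auto simp: mdist_commute)
  next
    fix a b a' b' assume p: "(a,b) \<in> R" "(a',b') \<in> R"
    then have m: "a \<in> mspace A" "b \<in> mspace B" "a' \<in> mspace A" "b' \<in> mspace B"
      "mdist Z (f a) (g b) < s" "mdist Z (f a') (g b') < s" unfolding R_def by auto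
    have t1: "mdist Z (f a) (f a') \<le> mdist Z (f a) (g b) + mdist Z (g b) (f a')"
      using m fA gB mdist_triangle by metis
    have t2: "mdist Z (g b) (f a') \<le> mdist Z (g b) (g b') + mdist Z (g b') (f a')"
      using m fA gB mdist_triangle by metis
    have t3: "mdist Z (g b) (g b') \<le> mdist Z (g b) (f a) + mdist Z (f a) (g b')"
      using m fA gB mdist_triangle by metis
    have t4: "mdist Z (f a) (g b') \<le> mdist Z (f a) (f a') + mdist Z (f a') (g b')"
      using m fA gB mdist_triangle by metis
    have c: "mdist Z (g b') (f a') = mdist Z (f a') (g b')" "mdist Z (g b) (f a) = mdist Z (f a) (g b)"
      by (simp_all add: mdist_commute)
    show "\<bar>mdist A a a' - mdist B b b'\<bar> \<le> 2 * s"
      using t1 t2 t3 t4 c m fd[of a a'] gd[of b b'] by linarith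
  qed
  then show ?thesis using s by blast
qed

lemma Delta1_simps [simp]: "mspace Delta1 = {()}" "mdist Delta1 = (\<lambda>x y. 0)"
proof -
  have M: "Metric_space {()} (\<lambda>x y::unit. 0::real)" by unfold_locales auto
  show "mspace Delta1 = {()}" "mdist Delta1 = (\<lambda>x y. 0)"
    unfolding Delta1_def using Metric_space.mspace_metric[OF M] Metric_space.mdist_metric[OF M] by auto
qed

lemma D1_upper:
  assumes "mspace W \<noteq> {}" "\<And>p q. p \<in> mspace W \<Longrightarrow> q \<in> mspace W \<Longrightarrow> mdist W p q \<le> 2*\<rho>" "0 \<le> \<rho>"
  shows "GH_dist Delta1 W \<le> ereal \<rho>"
proof (rule corr_GH)
  show "corr Delta1 W ({()} \<times> mspace W) (2*\<rho>)"
    unfolding corr_def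
  proof (intro conjI allI impI ballI)
    show "{()} \<times> mspace W \<subseteq> mspace Delta1 \<times> mspace W" by simp
  next
    fix a :: unit
    from assms(1) obtain b where "b \<in> mspace W" by blast
    then show "\<exists>b. (a, b) \<in> {()} \<times> mspace W" by auto
  next
    fix b assume "b \<in> mspace W" then show "\<exists>a. (a, b) \<in> {()} \<times> mspace W" by auto
  next
    fix a b a' b' assume "(a, b) \<in> {()} \<times> mspace W" "(a', b') \<in> {()} \<times> mspace W"
    then have "mdist W b b' \<le> 2*\<rho>" "0 \<le> mdist W b b'" using assms(2) by auto
    then show "\<bar>mdist Delta1 a a' - mdist W b b'\<bar> \<le> 2 * \<rho>" by simp
  qed
qed (use assms in auto)

lemma D1_lower:
  assumes "GH_dist Delta1 W < ereal e"
  shows "mspace W \<noteq> {} \<and> (\<exists>s<e. \<forall>p\<in>mspace W. \<forall>q\<in>mspace W. mdist W p q \<le> 2 * s)"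
proof -
  obtain R s where Rs: "s < e" "corr Delta1 W R (2 * s)" using GH_lt_corr[OF assms] by blast
  have c1: "R \<subseteq> mspace Delta1 \<times> mspace W" and c2: "\<forall>a\<in>mspace Delta1. \<exists>b. (a,b)\<in>R"
    and c3: "\<forall>b\<in>mspace W. \<exists>a. (a,b)\<in>R"
    and c4: "\<forall>a b a' b'. (a,b)\<in>R \<longrightarrow> (a',b')\<in>R \<longrightarrow> \<bar>mdist Delta1 a a' - mdist W b b'\<bar> \<le> 2 * s"
    using Rs(2) unfolding corr_def by blast+
  obtain b where "((),b) \<in> R" using c2 by auto
  then have ne: "mspace W \<noteq> {}" using c1 by blast
  have "mdist W p q \<le> 2 * s" if "p \<in> mspace W" "q \<in> mspace W" for p q
  proof -
    from c3 that obtain u v where "(u,p) \<in> R" "(v,q) \<in> R" by meson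
    then have "\<bar>mdist Delta1 u v - mdist W p q\<bar> \<le> 2 * s" using c4 by blast
    then show ?thesis by simp
  qed
  then show ?thesis using ne Rs by blast
qed

lemma D1_char:
  assumes "GH_dist Delta1 W = ereal r"
  shows "mspace W \<noteq> {}" "\<And>p q. p \<in> mspace W \<Longrightarrow> q \<in> mspace W \<Longrightarrow> mdist W p q \<le> 2*r"
    "\<And>\<rho>. \<rho> < r \<Longrightarrow> \<exists>p\<in>mspace W. \<exists>q\<in>mspace W. mdist W p q > 2*\<rho>"
proof -
  show ne: "mspace W \<noteq> {}" using D1_lower[of W "r+1"] assms by simp
  show "mdist W p q \<le> 2*r" if "p \<in> mspace W" "q \<in> mspace W" for p q
  proof -
    have *: "mdist W p q \<le> 2*e" if "e > r" for e
    proof -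
      obtain s where "s < e" "\<forall>p\<in>mspace W. \<forall>q\<in>mspace W. mdist W p q \<le> 2 * s"
        using D1_lower[of W e] assms \<open>e > r\<close> by auto
      then show ?thesis using \<open>p \<in> mspace W\<close> \<open>q \<in> mspace W\<close> by fastforce
    qed
    show ?thesis
    proof (rule ccontr)
      assume nt: "\<not> mdist W p q \<le> 2*r"
      then have "mdist W p q \<le> 2*((mdist W p q/2 + r)/2)" by (intro *) auto
      moreover have "2*((mdist W p q/2 + r)/2) = mdist W p q/2 + r" by simp
      ultimately show False using nt by linarith
    qed
  qed
  show "\<exists>p\<in>mspace W. \<exists>q\<in>mspace W. mdist W p q > 2*\<rho>" if "\<rho> < r" for \<rho>
  proof (rule ccontr)
    assume "\<not> ?thesis"
    then have le: "\<And>p q. p \<in> mspace W \<Longrightarrow> q \<in> mspace W \<Longrightarrow> mdist W p q \<le> 2*\<rho>" by (meson not_le)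
    obtain p0 where "p0 \<in> mspace W" using ne by blast
    then have "0 \<le> \<rho>" using le[of p0 p0] mdist_self[of p0 W] by linarith
    then have "GH_dist Delta1 W \<le> ereal \<rho>" using D1_upper[OF ne le] by simp
    then show False using assms that by simp
  qed
qed

lemma D1_eq:
  assumes "mspace W \<noteq> {}" "\<And>p q. p \<in> mspace W \<Longrightarrow> q \<in> mspace W \<Longrightarrow> mdist W p q \<le> 2*r" "0 \<le> r"
    "\<And>\<rho>. \<rho> < r \<Longrightarrow> \<exists>p\<in>mspace W. \<exists>q\<in>mspace W. mdist W p q > 2*\<rho>"
  shows "GH_dist Delta1 W = ereal r"
proof (rule antisym)
  show "GH_dist Delta1 W \<le> ereal r" using D1_upper[OF assms(1,2,3)] .
  show "ereal r \<le> GH_dist Delta1 W"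
  proof (rule ccontr)
    assume "\<not> ereal r \<le> GH_dist Delta1 W"
    then have "GH_dist Delta1 W < ereal r" by simp
    then obtain s where "s < r" "\<forall>p\<in>mspace W. \<forall>q\<in>mspace W. mdist W p q \<le> 2 * s" using D1_lower by blast
    then show False using assms(4)[of s] by (meson not_le)
  qed
qed



definition al :: "real \<Rightarrow> real" where "al t = min 1 (3-t)"
definition be :: "real \<Rightarrow> real" where "be t = min 1 t"
definition la :: "real \<Rightarrow> real" where "la t = max 0 (min 1 (2-t))"
definition mu :: "real \<Rightarrow> real" where "mu t = max 0 (min 1 (t-1))"
definition nu :: "real \<Rightarrow> real" where "nu t = min (al t) (be t)"

lemma params:
  assumes "0 \<le> t" "t \<le> 3"
  shows "0 \<le> la t" "la t \<le> al t" "al t \<le> 1" "0 \<le> mu t" "mu t \<le> be t" "be t \<le> 1"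
    "0 \<le> al t" "0 \<le> be t" "0 \<le> nu t" "nu t \<le> al t" "nu t \<le> be t"
    "la t = al t \<or> nu t = al t" "mu t = be t \<or> nu t = be t"
    "al t > 0 \<and> be t > 0 \<Longrightarrow> nu t > 0"
    "al t \<le> 0 \<Longrightarrow> t = 3" "be t \<le> 0 \<Longrightarrow> t = 0"
    "t \<le> 2 \<Longrightarrow> al t = 1" "t \<ge> 1 \<Longrightarrow> be t = 1"
  using assms unfolding al_def be_def la_def mu_def nu_def by (auto simp: min_def max_def split: if_splits)

lemma params_lip:
  shows "\<bar>al t - al t'\<bar> \<le> \<bar>t - t'\<bar>" "\<bar>be t - be t'\<bar> \<le> \<bar>t - t'\<bar>"
    "\<bar>la t - la t'\<bar> \<le> \<bar>t - t'\<bar>" "\<bar>mu t - mu t'\<bar> \<le> \<bar>t - t'\<bar>"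
    "\<bar>nu t - nu t'\<bar> \<le> \<bar>t - t'\<bar>"
  unfolding al_def be_def la_def mu_def nu_def by (auto simp: min_def max_def abs_if)

lemma max3_lip:
  fixes a b c a' b' c' K :: real
  assumes "\<bar>a - a'\<bar> \<le> K" "\<bar>b - b'\<bar> \<le> K" "\<bar>c - c'\<bar> \<le> K"
  shows "\<bar>max a (max b c) - max a' (max b' c')\<bar> \<le> K"
  using assms by (auto simp: max_def abs_le_iff)

lemma max3_mono:
  fixes a b c a1 k :: real
  assumes "a \<le> k + a1" "0 \<le> k"
  shows "max a (max b c) \<le> k + max a1 (max b c)"
  using assms by (auto simp: max_def)

lemma max3_mono2:
  fixes a b c b1 k :: real
  assumes "b \<le> k + b1" "0 \<le> k"
  shows "max a (max b c) \<le> k + max a (max b1 c)"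
  using assms by (auto simp: max_def)


locale constr =
  fixes X :: "'a metric" and Y :: "'b metric" and r :: real and x0 :: 'a and y0 :: 'b
  assumes rpos: "r > 0" and x0: "x0 \<in> mspace X" and y0: "y0 \<in> mspace Y"
    and bX: "\<And>p q. p \<in> mspace X \<Longrightarrow> q \<in> mspace X \<Longrightarrow> mdist X p q \<le> 2*r"
    and bY: "\<And>p q. p \<in> mspace Y \<Longrightarrow> q \<in> mspace Y \<Longrightarrow> mdist Y p q \<le> 2*r"
begin

definition cr :: "real \<Rightarrow> 'a \<Rightarrow> 'b \<Rightarrow> real" where
  "cr t x y = max (la t * mdist X x x0) (max (mu t * mdist Y y y0) (nu t * r))"

definition D :: "real \<Rightarrow> ('a + 'b + real) \<Rightarrow> ('a + 'b + real) \<Rightarrow> real" where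
  "D t u v = (case u of
      Inl x \<Rightarrow> (case v of Inl x' \<Rightarrow> al t * mdist X x x' | Inr (Inl y) \<Rightarrow> cr t x y | Inr (Inr _) \<Rightarrow> 0)
    | Inr (Inl y) \<Rightarrow> (case v of Inl x \<Rightarrow> cr t x y | Inr (Inl y') \<Rightarrow> be t * mdist Y y y' | Inr (Inr _) \<Rightarrow> 0)
    | Inr (Inr _) \<Rightarrow> 0)"

lemma D_simps [simp]:
  "D t (Inl x) (Inl x') = al t * mdist X x x'"
  "D t (Inl x) (Inr (Inl y)) = cr t x y"
  "D t (Inr (Inl y)) (Inl x) = cr t x y"
  "D t (Inr (Inl y)) (Inr (Inl y')) = be t * mdist Y y y'"
  by (simp_all add: D_def)

definition S :: "('a + 'b + real) set" where
  "S = Inl ` mspace X \<union> Inr ` Inl ` mspace Y"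

definition C :: "real \<Rightarrow> ('a + 'b + real) set" where
  "C t = {Inl x | x. x \<in> mspace X \<and> al t > 0} \<union> {Inr (Inl y) | y. y \<in> mspace Y \<and> be t > 0}"

lemma C_sub: "C t \<subseteq> S" unfolding C_def S_def by auto

lemma cr_nonneg: assumes "0 \<le> t" "t \<le> 3" shows "0 \<le> cr t x y"
proof -
  have "0 \<le> nu t * r" using params(9)[OF assms] rpos by simp
  then show ?thesis unfolding cr_def by linarith
qed

lemma cr_ge_nu: "nu t * r \<le> cr t x y"
  unfolding cr_def by simp

lemma cr_ge_la: "la t * mdist X x x0 \<le> cr t x y"
  unfolding cr_def by simp

lemma cr_ge_mu: "mu t * mdist Y y y0 \<le> cr t x y"
  unfolding cr_def by simp

lemma S_cases: "u \<in> S \<Longrightarrow> (\<And>x. u = Inl x \<Longrightarrow> x \<in> mspace X \<Longrightarrow> P) \<Longrightarrow> (\<And>y. u = Inr (Inl y) \<Longrightarrow> y \<in> mspace Y \<Longrightarrow> P) \<Longrightarrow> P"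
  unfolding S_def by blast

lemma D_nonneg: assumes t: "0 \<le> t" "t \<le> 3" and "u \<in> S" "v \<in> S" shows "0 \<le> D t u v"
proof -
  have a: "0 \<le> al t" "0 \<le> be t" using params[OF t] by auto
  show ?thesis
    by (rule S_cases[OF assms(3)]; rule S_cases[OF assms(4)]) (simp_all add: a cr_nonneg[OF t])
qed

lemma D_commute: "u \<in> S \<Longrightarrow> v \<in> S \<Longrightarrow> D t u v = D t v u"
  by (erule S_cases; erule S_cases) (simp_all add: mdist_commute)

lemma tri_XXY:
  assumes t: "0 \<le> t" "t \<le> 3" and m: "x \<in> mspace X" "x1 \<in> mspace X" "y \<in> mspace Y"
  shows "cr t x y \<le> al t * mdist X x x1 + cr t x1 y"
proof -
  have "mdist X x x0 \<le> mdist X x x1 + mdist X x1 x0" using m x0 mdist_triangle by metis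
  then have "la t * mdist X x x0 \<le> la t * (mdist X x x1 + mdist X x1 x0)"
    using params[OF t] by (intro mult_left_mono) auto
  then have "la t * mdist X x x0 \<le> la t * mdist X x x1 + la t * mdist X x1 x0"
    by (simp add: distrib_left)
  moreover have "la t * mdist X x x1 \<le> al t * mdist X x x1"
    using params[OF t] by (intro mult_right_mono) auto
  ultimately have "la t * mdist X x x0 \<le> al t * mdist X x x1 + la t * mdist X x1 x0" by linarith
  then show ?thesis unfolding cr_def using params[OF t] by (intro max3_mono) auto
qed

lemma tri_YYX:
  assumes t: "0 \<le> t" "t \<le> 3" and m: "y \<in> mspace Y" "y1 \<in> mspace Y" "x \<in> mspace X"
  shows "cr t x y \<le> be t * mdist Y y y1 + cr t x y1"
proof -
  have "mdist Y y y0 \<le> mdist Y y y1 + mdist Y y1 y0" using m y0 mdist_triangle by metis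
  then have "mu t * mdist Y y y0 \<le> mu t * (mdist Y y y1 + mdist Y y1 y0)"
    using params[OF t] by (intro mult_left_mono) auto
  then have "mu t * mdist Y y y0 \<le> mu t * mdist Y y y1 + mu t * mdist Y y1 y0"
    by (simp add: distrib_left)
  moreover have "mu t * mdist Y y y1 \<le> be t * mdist Y y y1"
    using params[OF t] by (intro mult_right_mono) auto
  ultimately have "mu t * mdist Y y y0 \<le> be t * mdist Y y y1 + mu t * mdist Y y1 y0" by linarith
  then show ?thesis unfolding cr_def using params[OF t] by (intro max3_mono2) auto
qed

lemma tri_XYX:
  assumes t: "0 \<le> t" "t \<le> 3" and m: "x \<in> mspace X" "x2 \<in> mspace X" "y \<in> mspace Y"
  shows "al t * mdist X x x2 \<le> cr t x y + cr t x2 y"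
proof (cases "la t = al t")
  case True
  have "mdist X x x2 \<le> mdist X x x0 + mdist X x0 x2" using m x0 mdist_triangle by metis
  then have "al t * mdist X x x2 \<le> al t * (mdist X x x0 + mdist X x0 x2)"
    using params[OF t] by (intro mult_left_mono) auto
  then have "al t * mdist X x x2 \<le> la t * mdist X x x0 + la t * mdist X x2 x0"
    using True by (simp add: distrib_left mdist_commute)
  then show ?thesis using cr_ge_la[of t x y] cr_ge_la[of t x2 y] by linarith
next
  case False
  then have nu: "nu t = al t" using params[OF t] by blast
  have "al t * mdist X x x2 \<le> al t * (2*r)" using params[OF t] bX[OF m(1,2)] by (intro mult_left_mono) auto
  moreover have "al t * (2*r) = 2 * (nu t * r)" using nu by simp
  ultimately show ?thesis using cr_ge_nu[of t x y] cr_ge_nu[of t x2 y] by linarith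
qed

lemma tri_YXY:
  assumes t: "0 \<le> t" "t \<le> 3" and m: "y \<in> mspace Y" "y2 \<in> mspace Y" "x \<in> mspace X"
  shows "be t * mdist Y y y2 \<le> cr t x y + cr t x y2"
proof (cases "mu t = be t")
  case True
  have "mdist Y y y2 \<le> mdist Y y y0 + mdist Y y0 y2" using m y0 mdist_triangle by metis
  then have "be t * mdist Y y y2 \<le> be t * (mdist Y y y0 + mdist Y y0 y2)"
    using params[OF t] by (intro mult_left_mono) auto
  then have "be t * mdist Y y y2 \<le> mu t * mdist Y y y0 + mu t * mdist Y y2 y0"
    using True by (simp add: distrib_left mdist_commute)
  then show ?thesis using cr_ge_mu[of t y x] cr_ge_mu[of t y2 x] by linarith
next
  case False
  then have nu: "nu t = be t" using params[OF t] by blast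
  have "be t * mdist Y y y2 \<le> be t * (2*r)" using params[OF t] bY[OF m(1,2)] by (intro mult_left_mono) auto
  moreover have "be t * (2*r) = 2 * (nu t * r)" using nu by simp
  ultimately show ?thesis using cr_ge_nu[of t x y] cr_ge_nu[of t x y2] by linarith
qed

lemma D_triangle:
  assumes t: "0 \<le> t" "t \<le> 3" and S: "u \<in> S" "v \<in> S" "w \<in> S"
  shows "D t u w \<le> D t u v + D t v w"
proof -
  have tX: "al t * mdist X x x2 \<le> al t * mdist X x x1 + al t * mdist X x1 x2"
    if "x \<in> mspace X" "x1 \<in> mspace X" "x2 \<in> mspace X" for x x1 x2
  proof -
    have "al t * mdist X x x2 \<le> al t * (mdist X x x1 + mdist X x1 x2)"
      using mdist_triangle[OF that] params[OF t] by (intro mult_left_mono) auto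
    then show ?thesis by (simp add: distrib_left)
  qed
  have tY: "be t * mdist Y x x2 \<le> be t * mdist Y x x1 + be t * mdist Y x1 x2"
    if "x \<in> mspace Y" "x1 \<in> mspace Y" "x2 \<in> mspace Y" for x x1 x2
  proof -
    have "be t * mdist Y x x2 \<le> be t * (mdist Y x x1 + mdist Y x1 x2)"
      using mdist_triangle[OF that] params[OF t] by (intro mult_left_mono) auto
    then show ?thesis by (simp add: distrib_left)
  qed
  show ?thesis
  proof (rule S_cases[OF S(1)]; rule S_cases[OF S(2)]; rule S_cases[OF S(3)])
    fix x x1 x2 assume "u = Inl x" "x \<in> mspace X" "v = Inl x1" "x1 \<in> mspace X" "w = Inl x2" "x2 \<in> mspace X"
    then show ?thesis using tX by simp
  next
    fix x x1 y assume "u = Inl x" "x \<in> mspace X" "v = Inl x1" "x1 \<in> mspace X" "w = Inr (Inl y)" "y \<in> mspace Y"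
    then show ?thesis using tri_XXY[OF t] by simp
  next
    fix x y x2 assume "u = Inl x" "x \<in> mspace X" "v = Inr (Inl y)" "y \<in> mspace Y" "w = Inl x2" "x2 \<in> mspace X"
    then show ?thesis using tri_XYX[OF t] by simp
  next
    fix x y y2 assume "u = Inl x" "x \<in> mspace X" "v = Inr (Inl y)" "y \<in> mspace Y" "w = Inr (Inl y2)" "y2 \<in> mspace Y"
    then show ?thesis using tri_YYX[OF t, of y2 y x] by (simp add: mdist_commute add.commute)
  next
    fix y x x2 assume "u = Inr (Inl y)" "y \<in> mspace Y" "v = Inl x" "x \<in> mspace X" "w = Inl x2" "x2 \<in> mspace X"
    then show ?thesis using tri_XXY[OF t, of x2 x y] by (simp add: mdist_commute add.commute)
  next
    fix y x y2 assume "u = Inr (Inl y)" "y \<in> mspace Y" "v = Inl x" "x \<in> mspace X" "w = Inr (Inl y2)" "y2 \<in> mspace Y"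
    then show ?thesis using tri_YXY[OF t] by simp
  next
    fix y y1 x assume "u = Inr (Inl y)" "y \<in> mspace Y" "v = Inr (Inl y1)" "y1 \<in> mspace Y" "w = Inl x" "x \<in> mspace X"
    then show ?thesis using tri_YYX[OF t] by simp
  next
    fix y y1 y2 assume "u = Inr (Inl y)" "y \<in> mspace Y" "v = Inr (Inl y1)" "y1 \<in> mspace Y" "w = Inr (Inl y2)" "y2 \<in> mspace Y"
    then show ?thesis using tY by simp
  qed
qed


lemma D_nonneg_all: assumes t: "0 \<le> t" "t \<le> 3" shows "0 \<le> D t u v"
proof -
  have a: "0 \<le> al t" "0 \<le> be t" using params[OF t] by auto
  show ?thesis unfolding D_def using a cr_nonneg[OF t] by (auto split: sum.split)
qed

lemma D_commute_all: "D t u v = D t v u"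
  unfolding D_def by (auto split: sum.split simp: mdist_commute)

lemma MC: assumes t: "0 \<le> t" "t \<le> 3" shows "Metric_space (C t) (D t)"
proof
  fix u v show "0 \<le> D t u v" using D_nonneg_all[OF t] .
  show "D t u v = D t v u" by (rule D_commute_all)
next
  fix u v assume uv: "u \<in> C t" "v \<in> C t"
  have p: "al t > 0 \<and> be t > 0 \<Longrightarrow> nu t > 0" using params[OF t] by blast
  have crpos: "cr t x y > 0" if "al t > 0" "be t > 0" for x y
  proof -
    have "0 < nu t * r" using p that rpos by simp
    then show ?thesis using cr_ge_nu[of t x y] by linarith
  qed
  show "D t u v = 0 \<longleftrightarrow> u = v"
    using uv unfolding C_def by (auto simp: mdist_self) (metis crpos less_irrefl)+
next
  fix u v w assume "u \<in> C t" "v \<in> C t" "w \<in> C t"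
  then show "D t u w \<le> D t u v + D t v w" using D_triangle[OF t] C_sub by blast
qed

definition gam :: "real \<Rightarrow> ('a + 'b + real) metric" where
  "gam t = metric (C t, D t)"

lemma gam: assumes "0 \<le> t" "t \<le> 3" shows "mspace (gam t) = C t" "mdist (gam t) = D t"
  unfolding gam_def using Metric_space.mspace_metric[OF MC[OF assms]] Metric_space.mdist_metric[OF MC[OF assms]]
  by auto

definition pi :: "real \<Rightarrow> ('a + 'b + real) \<Rightarrow> ('a + 'b + real)" where
  "pi t u = (if u \<in> C t then u else if al t > 0 then Inl x0 else Inr (Inl y0))"

lemma pi_in: assumes t: "0 \<le> t" "t \<le> 3" shows "pi t u \<in> C t"
proof -
  have "al t > 0 \<or> be t > 0" using params[OF t] by force
  then show ?thesis unfolding pi_def C_def using x0 y0 by auto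
qed

lemma pi_zero: assumes t: "0 \<le> t" "t \<le> 3" and u: "u \<in> S" shows "D t u (pi t u) = 0"
proof (cases "u \<in> C t")
  case True
  then show ?thesis unfolding pi_def using u by (elim S_cases) (auto simp: mdist_self)
next
  case False
  show ?thesis
  proof (rule S_cases[OF u])
    fix x assume x: "u = Inl x" "x \<in> mspace X"
    then have "\<not> al t > 0" using False unfolding C_def by auto
    then have t3: "t = 3" using params[OF t] by auto
    have "pi t u = Inr (Inl y0)" unfolding pi_def using False \<open>\<not> al t > 0\<close> by auto
    then show ?thesis using x t3 y0 by (simp add: cr_def la_def mu_def nu_def al_def be_def mdist_self)
  next
    fix y assume y: "u = Inr (Inl y)" "y \<in> mspace Y"
    then have "\<not> be t > 0" using False unfolding C_def by auto
    then have t0: "t = 0" using params[OF t] by auto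
    have "pi t u = Inl x0" unfolding pi_def using False t0 by (auto simp: al_def)
    then show ?thesis using y t0 x0 by (simp add: cr_def la_def mu_def nu_def al_def be_def mdist_self)
  qed
qed

lemma pi_D: assumes t: "0 \<le> t" "t \<le> 3" and uv: "u \<in> S" "v \<in> S"
  shows "D t (pi t u) (pi t v) = D t u v"
proof -
  have pu: "pi t u \<in> S" "pi t v \<in> S" using pi_in[OF t] C_sub by blast+
  have z: "D t u (pi t u) = 0" "D t v (pi t v) = 0" using pi_zero[OF t] uv by auto
  have z': "D t (pi t u) u = 0" "D t (pi t v) v = 0" using z D_commute_all by metis+
  have 1: "D t (pi t u) v = D t u v"
    using D_triangle[OF t pu(1) uv(1) uv(2)] D_triangle[OF t uv(1) pu(1) uv(2)] z z' by linarith
  have "D t (pi t u) (pi t v) = D t (pi t u) v"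
    using D_triangle[OF t pu(1) pu(2) uv(2)] D_triangle[OF t pu(1) uv(2) pu(2)] z z' by linarith
  then show ?thesis using 1 by simp
qed

lemma lip_mul:
  fixes f :: "real \<Rightarrow> real"
  assumes "\<bar>f t - f t'\<bar> \<le> \<bar>t - t'\<bar>" "0 \<le> d" "d \<le> K"
  shows "\<bar>f t * d - f t' * d\<bar> \<le> K * \<bar>t - t'\<bar>"
proof -
  have "\<bar>f t * d - f t' * d\<bar> = \<bar>f t - f t'\<bar> * d" using assms(2) by (simp add: abs_mult left_diff_distrib[symmetric])
  also have "\<dots> \<le> \<bar>t - t'\<bar> * K" using assms by (intro mult_mono) auto
  finally show ?thesis by (simp add: mult.commute)
qed

lemma D_lip: assumes uv: "u \<in> S" "v \<in> S"
  shows "\<bar>D t u v - D t' u v\<bar> \<le> 2 * r * \<bar>t - t'\<bar>"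
proof -
  have cr_lip: "\<bar>cr t x y - cr t' x y\<bar> \<le> 2 * r * \<bar>t - t'\<bar>" if "x \<in> mspace X" "y \<in> mspace Y" for x y
  proof -
    have a: "\<bar>la t * mdist X x x0 - la t' * mdist X x x0\<bar> \<le> 2 * r * \<bar>t - t'\<bar>"
      using lip_mul[OF params_lip(3)[of t t']] bX[OF that(1) x0] by simp
    have b: "\<bar>mu t * mdist Y y y0 - mu t' * mdist Y y y0\<bar> \<le> 2 * r * \<bar>t - t'\<bar>"
      using lip_mul[OF params_lip(4)[of t t']] bY[OF that(2) y0] by simp
    have c: "\<bar>nu t * r - nu t' * r\<bar> \<le> 2 * r * \<bar>t - t'\<bar>"
      using lip_mul[OF params_lip(5)[of t t'], of r "2*r"] rpos by simp
    show ?thesis unfolding cr_def by (rule max3_lip[OF a b c])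
  qed
  show ?thesis
  proof (rule S_cases[OF uv(1)]; rule S_cases[OF uv(2)])
    fix x x' assume "u = Inl x" "x \<in> mspace X" "v = Inl x'" "x' \<in> mspace X"
    then show ?thesis using lip_mul[OF params_lip(1)[of t t']] bX by simp
  next
    fix x y assume "u = Inl x" "x \<in> mspace X" "v = Inr (Inl y)" "y \<in> mspace Y"
    then show ?thesis using cr_lip by simp
  next
    fix x y assume "u = Inr (Inl y)" "y \<in> mspace Y" "v = Inl x" "x \<in> mspace X"
    then show ?thesis using cr_lip by simp
  next
    fix y y' assume "u = Inr (Inl y)" "y \<in> mspace Y" "v = Inr (Inl y')" "y' \<in> mspace Y"
    then show ?thesis using lip_mul[OF params_lip(2)[of t t']] bY by simp
  qed
qed

lemma corr_gam:
  assumes t: "0 \<le> t" "t \<le> 3" and t': "0 \<le> t'" "t' \<le> 3"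
  shows "corr (gam t) (gam t') ((\<lambda>u. (pi t u, pi t' u)) ` S) (2 * r * \<bar>t - t'\<bar>)"
  unfolding corr_def gam[OF t] gam[OF t']
proof (intro conjI allI impI ballI)
  show "(\<lambda>u. (pi t u, pi t' u)) ` S \<subseteq> C t \<times> C t'" using pi_in[OF t] pi_in[OF t'] by auto
next
  fix a assume "a \<in> C t"
  then have "a \<in> S" "pi t a = a" using C_sub unfolding pi_def by auto
  then show "\<exists>b. (a, b) \<in> (\<lambda>u. (pi t u, pi t' u)) ` S" by force
next
  fix b assume "b \<in> C t'"
  then have "b \<in> S" "pi t' b = b" using C_sub unfolding pi_def by auto
  then show "\<exists>a. (a, b) \<in> (\<lambda>u. (pi t u, pi t' u)) ` S" by force
next
  fix a b a' b' assume "(a, b) \<in> (\<lambda>u. (pi t u, pi t' u)) ` S" "(a', b') \<in> (\<lambda>u. (pi t u, pi t' u)) ` S"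
  then obtain u v where uv: "u \<in> S" "v \<in> S" "a = pi t u" "b = pi t' u" "a' = pi t v" "b' = pi t' v" by auto
  then show "\<bar>D t a a' - D t' b b'\<bar> \<le> 2 * r * \<bar>t - t'\<bar>"
    using pi_D[OF t uv(1,2)] pi_D[OF t' uv(1,2)] D_lip[OF uv(1,2)] by simp
qed


lemma C0: "C 0 = Inl ` mspace X" unfolding C_def al_def be_def by auto
lemma C3: "C 3 = Inr ` Inl ` mspace Y" unfolding C_def al_def be_def by auto

lemma iso0: "isometric (gam 0) X"
  unfolding isometric_def gam[of 0, simplified] C0
proof (intro exI conjI ballI)
  show "bij_betw projl (Inl ` mspace X) (mspace X)"
    unfolding bij_betw_def inj_on_def by (auto simp: image_image)
next
  fix u v :: "'a + 'b + real" assume "u \<in> Inl ` mspace X" "v \<in> Inl ` mspace X"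
  then show "mdist X (projl u) (projl v) = D 0 u v" by (auto simp: al_def)
qed

lemma iso3: "isometric (gam 3) Y"
  unfolding isometric_def gam[of 3, simplified] C3
proof (intro exI conjI ballI)
  show "bij_betw (\<lambda>u. projl (projr u)) (Inr ` Inl ` mspace Y) (mspace Y)"
    unfolding bij_betw_def inj_on_def by (auto simp: image_image)
next
  fix u v :: "'a + 'b + real" assume "u \<in> Inr ` Inl ` mspace Y" "v \<in> Inr ` Inl ` mspace Y"
  then show "mdist Y (projl (projr u)) (projl (projr v)) = D 3 u v" by (auto simp: be_def)
qed

lemma D_le: assumes t: "0 \<le> t" "t \<le> 3" and uv: "u \<in> S" "v \<in> S" shows "D t u v \<le> 2*r"
proof -
  have P: "0 \<le> la t" "la t \<le> 1" "0 \<le> mu t" "mu t \<le> 1" "0 \<le> al t" "al t \<le> 1" "0 \<le> be t" "be t \<le> 1"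
    "0 \<le> nu t" "nu t \<le> 1"
    using params[OF t] by linarith+
  have m: "a * d \<le> 2*r" if "0 \<le> a" "a \<le> 1" "0 \<le> d" "d \<le> 2*r" for a d
  proof -
    have "a * d \<le> 1 * (2*r)" using that by (intro mult_mono) auto
    then show ?thesis by simp
  qed
  have crl: "cr t x y \<le> 2*r" if "x \<in> mspace X" "y \<in> mspace Y" for x y
  proof -
    have "la t * mdist X x x0 \<le> 2*r" using m[OF P(1,2)] bX[OF that(1) x0] by simp
    moreover have "mu t * mdist Y y y0 \<le> 2*r" using m[OF P(3,4)] bY[OF that(2) y0] by simp
    moreover have "nu t * r \<le> 2*r" using m[OF P(9,10), of r] rpos by simp
    ultimately show ?thesis unfolding cr_def by simp
  qed
  show ?thesis
  proof (rule S_cases[OF uv(1)]; rule S_cases[OF uv(2)])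
    fix x x' assume "u = Inl x" "x \<in> mspace X" "v = Inl x'" "x' \<in> mspace X"
    then show ?thesis using m[OF P(5,6)] bX by simp
  next
    fix x y assume "u = Inl x" "x \<in> mspace X" "v = Inr (Inl y)" "y \<in> mspace Y"
    then show ?thesis using crl by simp
  next
    fix x y assume "u = Inr (Inl y)" "y \<in> mspace Y" "v = Inl x" "x \<in> mspace X"
    then show ?thesis using crl by simp
  next
    fix y y' assume "u = Inr (Inl y)" "y \<in> mspace Y" "v = Inr (Inl y')" "y' \<in> mspace Y"
    then show ?thesis using m[OF P(7,8)] bY by simp
  qed
qed

lemma GH_gam:
  assumes t: "0 \<le> t" "t \<le> 3"
    and supX: "\<And>\<rho>. \<rho> < r \<Longrightarrow> \<exists>p\<in>mspace X. \<exists>q\<in>mspace X. mdist X p q > 2*\<rho>"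
    and supY: "\<And>\<rho>. \<rho> < r \<Longrightarrow> \<exists>p\<in>mspace Y. \<exists>q\<in>mspace Y. mdist Y p q > 2*\<rho>"
  shows "GH_dist Delta1 (gam t) = ereal r"
proof (rule D1_eq)
  show "mspace (gam t) \<noteq> {}" using pi_in[OF t] unfolding gam[OF t] by blast
  show "\<And>p q. p \<in> mspace (gam t) \<Longrightarrow> q \<in> mspace (gam t) \<Longrightarrow> mdist (gam t) p q \<le> 2 * r"
  proof -
    fix p q assume "p \<in> mspace (gam t)" "q \<in> mspace (gam t)"
    then have "p \<in> S" "q \<in> S" using C_sub unfolding gam[OF t] by auto
    then show "mdist (gam t) p q \<le> 2 * r" unfolding gam[OF t] by (rule D_le[OF t])
  qed
  show "0 \<le> r" using rpos by simp
  fix \<rho> assume \<rho>: "\<rho> < r"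
  show "\<exists>p\<in>mspace (gam t). \<exists>q\<in>mspace (gam t). 2 * \<rho> < mdist (gam t) p q"
  proof (cases "t \<le> 2")
    case True
    then have a: "al t = 1" using params[OF t] by blast
    obtain p q where "p \<in> mspace X" "q \<in> mspace X" "mdist X p q > 2*\<rho>" using supX[OF \<rho>] by blast
    moreover have "Inl p \<in> C t" "Inl q \<in> C t" using a \<open>p \<in> mspace X\<close> \<open>q \<in> mspace X\<close> unfolding C_def by auto
    ultimately show ?thesis unfolding gam[OF t] using a by (intro bexI[of _ "Inl p"] bexI[of _ "Inl q"]) simp_all
  next
    case False
    then have a: "be t = 1" using params[OF t] by simp
    obtain p q where "p \<in> mspace Y" "q \<in> mspace Y" "mdist Y p q > 2*\<rho>" using supY[OF \<rho>] by blast
    moreover have "Inr (Inl p) \<in> C t" "Inr (Inl q) \<in> C t" using a \<open>p \<in> mspace Y\<close> \<open>q \<in> mspace Y\<close> unfolding C_def by auto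
    ultimately show ?thesis unfolding gam[OF t] using a by (intro bexI[of _ "Inr (Inl p)"] bexI[of _ "Inr (Inl q)"]) simp_all
  qed
qed

lemma GH_self: assumes t: "0 \<le> t" "t \<le> 3" shows "GH_dist (gam t) (gam t) \<le> ereal 0"
proof (rule corr_GH)
  show "corr (gam t) (gam t) ((\<lambda>u. (pi t u, pi t u)) ` S) (2 * 0)" using corr_gam[OF t t] by simp
  show "mspace (gam t) \<noteq> {}" using pi_in[OF t] unfolding gam[OF t] by blast
qed simp

lemma cont: "continuous_map (top_of_set {0..3}) GH_top gam"
  unfolding GH_top_def
proof (rule continuous_on_generated_topo)
  fix U :: "('a + 'b + real) metric set" assume "U \<in> {GH_ball Cc e |Cc e. e > 0}"
  then obtain Cc e where U: "U = GH_ball Cc e" "e > 0" by blast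
  show "openin (top_of_set {0..3}) (gam -` U \<inter> topspace (top_of_set {0..3}))"
    unfolding openin_euclidean_subtopology_iff
  proof (intro conjI ballI)
    show "gam -` U \<inter> topspace (top_of_set {0..3}) \<subseteq> {0..3}" by simp
  next
    fix t0 assume "t0 \<in> gam -` U \<inter> topspace (top_of_set {0..3})"
    then have t0: "0 \<le> t0" "t0 \<le> 3" "GH_dist Cc (gam t0) < ereal e" using U(1) unfolding GH_ball_def by simp_all
    obtain R s where Rs: "s < e" "corr Cc (gam t0) R (2 * s)" using GH_lt_corr[OF t0(3)] by blast
    have c1: "R \<subseteq> mspace Cc \<times> mspace (gam t0)" using Rs(2) unfolding corr_def by (elim conjE) assumption
    have c3: "\<forall>b\<in>mspace (gam t0). \<exists>a. (a,b)\<in>R" using Rs(2) unfolding corr_def by (elim conjE) assumption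
    have c4: "\<forall>a b a' b'. (a,b)\<in>R \<longrightarrow> (a',b')\<in>R \<longrightarrow> \<bar>mdist Cc a a' - mdist (gam t0) b b'\<bar> \<le> 2 * s"
      using Rs(2) unfolding corr_def by (elim conjE) assumption
    obtain b where b: "b \<in> mspace (gam t0)" using pi_in[OF t0(1,2)] unfolding gam[OF t0(1,2)] by blast
    then obtain a where ab: "(a, b) \<in> R" using c3 by blast
    then have aC: "a \<in> mspace Cc" using c1 by blast
    have "\<bar>mdist Cc a a - mdist (gam t0) b b\<bar> \<le> 2 * s" using c4 ab by blast
    then have s0: "0 \<le> s" using aC b by (simp add: mdist_self)
    show "\<exists>d>0. \<forall>t\<in>{0..3}. dist t t0 < d \<longrightarrow> t \<in> gam -` U \<inter> topspace (top_of_set {0..3})"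
    proof (intro exI conjI ballI impI)
      show "(e - s) / r > 0" using Rs(1) rpos by simp
    next
      fix t :: real assume t: "t \<in> {0..3}" "dist t t0 < (e - s) / r"
      then have t': "0 \<le> t" "t \<le> 3" by auto
      have "corr Cc (gam t) (R O ((\<lambda>u. (pi t0 u, pi t u)) ` S)) (2 * s + 2 * r * \<bar>t0 - t\<bar>)"
        by (rule corr_comp[OF Rs(2) corr_gam[OF t0(1,2) t']])
      then have "corr Cc (gam t) (R O ((\<lambda>u. (pi t0 u, pi t u)) ` S)) (2 * (s + r * \<bar>t0 - t\<bar>))"
        by (simp add: distrib_left mult.assoc)
      then have g: "GH_dist Cc (gam t) \<le> ereal (s + r * \<bar>t0 - t\<bar>)"
      proof (rule corr_GH)
        show "mspace Cc \<noteq> {}" using aC by blast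
        show "0 \<le> s + r * \<bar>t0 - t\<bar>" using s0 rpos by simp
      qed
      have "\<bar>t0 - t\<bar> < (e - s) / r" using t(2) by (simp add: dist_real_def abs_minus_commute)
      then have "r * \<bar>t0 - t\<bar> < r * ((e - s) / r)" using rpos by (rule mult_strict_left_mono)
      then have "s + r * \<bar>t0 - t\<bar> < e" using rpos by simp
      then have "ereal (s + r * \<bar>t0 - t\<bar>) < ereal e" by simp
      then have "GH_dist Cc (gam t) < ereal e" using g by (rule order_le_less_trans[rotated])
      then show "t \<in> gam -` U \<inter> topspace (top_of_set {0..3})" using U(1) t(1) unfolding GH_ball_def by simp
    qed
  qed
next
  show "gam ` topspace (top_of_set {0..3}) \<subseteq> \<Union> {GH_ball Cc e |Cc e. e > 0}"
  proof
    fix g assume "g \<in> gam ` topspace (top_of_set {0..3})"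
    then obtain t where t: "0 \<le> t" "t \<le> 3" "g = gam t" by auto
    have "GH_dist (gam t) (gam t) < ereal 1" by (rule order_le_less_trans[OF GH_self[OF t(1,2)]]) simp
    then have "GH_dist g g < ereal 1" using t(3) by simp
    then have "g \<in> GH_ball g 1" unfolding GH_ball_def by simp
    moreover have "GH_ball g 1 \<in> {GH_ball Cc e |Cc e. e > 0}" by (intro CollectI exI[of _ g] exI[of _ 1]) simp
    ultimately show "g \<in> \<Union> {GH_ball Cc e |Cc e. e > 0}" by (rule UnionI[rotated])
  qed
qed


end


lemma singleton_of_zero:
  assumes "x0 \<in> mspace X" "\<And>p q. p \<in> mspace X \<Longrightarrow> q \<in> mspace X \<Longrightarrow> mdist X p q \<le> 2*0"
  shows "mspace X = {x0}"
proof -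
  have "p = x0" if "p \<in> mspace X" for p
    using assms(2)[OF that assms(1)] mdist_nonneg[of X p x0] mdist_zero[OF that assms(1)] by simp
  then show ?thesis using assms(1) by blast
qed

theorem theorem1:
  fixes r :: real and X :: "'a metric" and Y :: "'b metric"
  assumes "r \<ge> 0"
    and "GH_dist Delta1 X = ereal r"
    and "GH_dist Delta1 Y = ereal r"
  shows "\<exists>(\<gamma> :: real \<Rightarrow> ('a + 'b + real) metric) a b. a \<le> b \<and>
           continuous_map (top_of_set {a..b}) GH_top \<gamma> \<and>
           isometric (\<gamma> a) X \<and> isometric (\<gamma> b) Y \<and>
           (\<forall>t\<in>{a..b}. GH_dist Delta1 (\<gamma> t) = ereal r)"
proof -
  note X = D1_char[OF assms(2)] and Y = D1_char[OF assms(3)]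
  obtain x0 where x0: "x0 \<in> mspace X" using X(1) by blast
  obtain y0 where y0: "y0 \<in> mspace Y" using Y(1) by blast
  show ?thesis
  proof (cases "r = 0")
    case False
    then have rpos: "r > 0" using assms(1) by simp
    interpret c: constr X Y r x0 y0
      by unfold_locales (use rpos x0 y0 X(2) Y(2) in auto)
    show ?thesis
    proof (intro exI conjI ballI)
      show "(0::real) \<le> 3" by simp
      show "continuous_map (top_of_set {0..3}) GH_top c.gam" by (rule c.cont)
      show "isometric (c.gam 0) X" by (rule c.iso0)
      show "isometric (c.gam 3) Y" by (rule c.iso3)
      fix t :: real assume "t \<in> {0..3}"
      then show "GH_dist Delta1 (c.gam t) = ereal r" using c.GH_gam X(3) Y(3) by auto
    qed
  next
    case True
    have sX: "mspace X = {x0}" using singleton_of_zero[OF x0] X(2) True by blast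
    have sY: "mspace Y = {y0}" using singleton_of_zero[OF y0] Y(2) True by blast
    interpret c: constr X Y 1 x0 y0
      by unfold_locales (use x0 y0 sX sY in \<open>auto simp: mdist_self\<close>)
    have g0: "mspace (c.gam 0) = Inl ` {x0}" "mdist (c.gam 0) = c.D 0" using c.gam[of 0] c.C0 sX by auto
    have D0: "c.D 0 u v = 0" if "u \<in> Inl ` {x0}" "v \<in> Inl ` {x0}" for u v
      using that x0 by (auto simp: mdist_self al_def)
    show ?thesis
    proof (intro exI conjI ballI)
      show "(0::real) \<le> 0" by simp
      have "continuous_map (subtopology (top_of_set {0..3}) {0..0}) GH_top c.gam"
        by (rule continuous_map_from_subtopology[OF c.cont])
      then show "continuous_map (top_of_set {0..0}) GH_top c.gam"
        by (simp add: subtopology_subtopology)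
      show "isometric (c.gam 0) X" by (rule c.iso0)
      show "isometric (c.gam 0) Y"
        unfolding isometric_def g0 sY
      proof (intro exI conjI ballI)
        show "bij_betw (\<lambda>_. y0) (Inl ` {x0}) {y0}" by (simp add: bij_betw_def)
        fix u v :: "'a + 'b + real" assume "u \<in> Inl ` {x0}" "v \<in> Inl ` {x0}"
        then show "mdist Y y0 y0 = c.D 0 u v" using D0 y0 by (simp add: mdist_self)
      qed
      fix t :: real assume "t \<in> {0..0}"
      then have t: "t = 0" by simp
      show "GH_dist Delta1 (c.gam t) = ereal r"
        unfolding t True
      proof (rule D1_eq)
        show "mspace (c.gam 0) \<noteq> {}" using g0 by simp
        show "\<And>p q. p \<in> mspace (c.gam 0) \<Longrightarrow> q \<in> mspace (c.gam 0) \<Longrightarrow> mdist (c.gam 0) p q \<le> 2 * 0"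
          using g0 x0 by (auto simp: mdist_self)
        show "0 \<le> (0::real)" by simp
        fix \<rho> :: real assume "\<rho> < 0"
        then show "\<exists>p\<in>mspace (c.gam 0). \<exists>q\<in>mspace (c.gam 0). 2 * \<rho> < mdist (c.gam 0) p q"
          using g0 x0 by (auto simp: mdist_self)
      qed
    qed
  qed
qed

end
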